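(* Let $\mathrm{opt}(\mathcal{I}_{\textsf{EVSP}})$ and $\mathrm{opt}(\mathcal{I}_{\textsf{BPP}})$ denote, respectively, the optimal value for the instances $\mathcal{I}_{\textsf{EVSP}}$ and $\mathcal{I}_{\textsf{BPP}}$, where $\mathcal{I}_{\textsf{EVSP}} = f(\mathcal{I}_{\textsf{BPP}})$. Then $\mathrm{opt}(\mathcal{I}_{\textsf{EVSP}}) = 2n - \mathrm{opt}(\mathcal{I}_{\textsf{BPP}})$.
   Context: The electric vehicle sharing problem (EVSP): there is a set of stations, each with a capacity (number of parking spaces) and a number of charging facilities; a fleet of identical electric vehicles with battery capacity $\textsf{L}$ initially located at stations; and a set of customers, each with a set of driving demands $(s^{\text{out}}, t_i, s^{\text{in}}, t_j, \varepsilon)$ (pick-up station, departure time, drop-off station, arrival time, required energy). A demand is fulfilled by a vehicle if the vehicle is at the pick-up station at time $t_i$, its battery energy is at least $\varepsilon$, and there is a free parking space at the drop-off station; the vehicle's energy decreases by $\varepsilon$ and increases only by charging at a charging facility. A customer is served iff all its demands are fulfilled; the objective is to maximize the total rental time $\sum (t_j - t_i)$ over demands of served customers. The one-dimensional bin packing problem (BPP): given items $\mathcal{N} = \{1,\dots,n\}$ with sizes $\ell_i \in (0,1]$, find a partition $\{\mathcal{N}_1,\dots,\mathcal{N}_k\}$ of $\mathcal{N}$ such that the sizes in each part sum to at most $1$ and $k$ (the number of bins) is minimized. The reduction $f$ maps a BPP instance $\mathcal{I}_{\textsf{BPP}}$ to the EVSP instance $\mathcal{I}_{\textsf{EVSP}}$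 with $2n$ customers, each having a single demand: there is a single station $s$ with capacity $n$ and no charging facilities; there are $n$ fully charged vehicles initially at $s$, each with battery capacity $\textsf{L} = 1$; for each item $i \in \mathcal{N}$ there is an item customer with the single demand $(s, 2i, s, 2i+1, \ell_i)$; and there are $n$ dummy customers, each with the single demand $(s, 1, s, 2, \textsf{L})$. Each customer contributes rental time $1$ to the objective, so maximizing total rental time is equivalent to maximizing the number of served customers. *)

theory Defs
  imports Complex_Main "HOL-Library.Disjoint_Sets"
begin

definition bpp_feasible :: "nat \<Rightarrow> (nat \<Rightarrow> real) \<Rightarrow> nat \<Rightarrow> bool" where
  "bpp_feasible n l k \<longleftrightarrow>
     (\<exists>P. partition_on {1..n} P \<and> card P = k \<and> (\<forall>B\<in>P. (\<Sum>i\<in>B. l i) \<le> 1))"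

definition bpp_opt :: "nat \<Rightarrow> (nat \<Rightarrow> real) \<Rightarrow> nat" where
  "bpp_opt n l = (LEAST k. bpp_feasible n l k)"

text \<open>A driving demand: pick-up station, departure time, drop-off station,
arrival time, required energy.  Time is discrete (natural numbers).\<close>

record demand =
  d_out :: nat
  d_dep :: nat
  d_in  :: nat
  d_arr :: nat
  d_eps :: real

text \<open>Stations are 0..<n_st, vehicles 0..<n_veh, customers 0..<length custs;
customer c has the demand list custs ! c.  Charging: a vehicle parked at a station
and occupying one of its charging facilities during a unit time step gains at most
c_rate energy (never exceeding the battery capacity).\<close>

record evsp_inst =
  n_st    :: nat
  st_cap  :: "nat \<Rightarrow> nat"
  st_chg  :: "nat \<Rightarrow> nat"
  batt    :: real
  c_rate  :: real
  n_veh   :: nat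
  v_home  :: "nat \<Rightarrow> nat"
  v_en0   :: "nat \<Rightarrow> real"
  custs   :: "demand list list"

datatype action = Idle | Charging | Riding "nat \<times> nat"

definition dem :: "evsp_inst \<Rightarrow> nat \<times> nat \<Rightarrow> demand" where
  "dem I d = custs I ! fst d ! snd d"

definition valid_dem :: "evsp_inst \<Rightarrow> nat \<times> nat \<Rightarrow> bool" where
  "valid_dem I d \<longleftrightarrow> fst d < length (custs I) \<and> snd d < length (custs I ! fst d)"

definition parked :: "evsp_inst \<Rightarrow> (nat \<Rightarrow> nat \<Rightarrow> action) \<Rightarrow> nat \<Rightarrow> nat \<Rightarrow> bool" where
  "parked I act v t \<longleftrightarrow> \<not> (\<exists>d. act v t = Riding d \<and> d_dep (dem I d) < t)"

text \<open>A schedule: served customer set S, vehicle assignment asg of demands,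
actions act v t (for the step t to t+1), location loc v t and energy en v t
of vehicle v at instant t.\<close>

definition evsp_feasible ::
  "evsp_inst \<Rightarrow> nat set \<Rightarrow> (nat \<times> nat \<Rightarrow> nat) \<Rightarrow> (nat \<Rightarrow> nat \<Rightarrow> action)
     \<Rightarrow> (nat \<Rightarrow> nat \<Rightarrow> nat) \<Rightarrow> (nat \<Rightarrow> nat \<Rightarrow> real) \<Rightarrow> bool" where
  "evsp_feasible I S asg act loc en \<longleftrightarrow>
     S \<subseteq> {..<length (custs I)} \<and>
     \<comment> \<open>initial configuration\<close>
     (\<forall>v<n_veh I. loc v 0 = v_home I v \<and> en v 0 = v_en0 I v) \<and>
     \<comment> \<open>energy stays within the battery\<close>
     (\<forall>v<n_veh I. \<forall>t. 0 \<le> en v t \<and> en v t \<le> batt I) \<and>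
     \<comment> \<open>parked vehicles are at stations\<close>
     (\<forall>v<n_veh I. \<forall>t. parked I act v t \<longrightarrow> loc v t < n_st I) \<and>
     \<comment> \<open>idle / charging steps\<close>
     (\<forall>v<n_veh I. \<forall>t. (act v t = Idle \<longrightarrow> loc v (Suc t) = loc v t \<and> en v (Suc t) = en v t)
        \<and> (act v t = Charging \<longrightarrow> loc v (Suc t) = loc v t \<and> en v t \<le> en v (Suc t)
              \<and> en v (Suc t) \<le> min (batt I) (en v t + c_rate I))) \<and>
     \<comment> \<open>riding only on assigned demands of served customers, during their time window\<close>
     (\<forall>v<n_veh I. \<forall>t d. act v t = Riding d \<longrightarrow>
        valid_dem I d \<and> fst d \<in> S \<and> asg d = v \<and> d_dep (dem I d) \<le> t \<and> t < d_arr (dem I d)) \<and>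
     \<comment> \<open>every demand of a served customer is fulfilled by its assigned vehicle\<close>
     (\<forall>d. valid_dem I d \<and> fst d \<in> S \<longrightarrow>
        (let v = asg d; e = dem I d in
          v < n_veh I \<and>
          (\<forall>t. d_dep e \<le> t \<and> t < d_arr e \<longrightarrow> act v t = Riding d) \<and>
          loc v (d_dep e) = d_out e \<and> d_eps e \<le> en v (d_dep e) \<and>
          loc v (d_arr e) = d_in e \<and> en v (d_arr e) = en v (d_dep e) - d_eps e)) \<and>
     \<comment> \<open>parking capacities\<close>
     (\<forall>t s. s < n_st I \<longrightarrow>
        card {v. v < n_veh I \<and> parked I act v t \<and> loc v t = s} \<le> st_cap I s) \<and>
     \<comment> \<open>charging facilities\<close>
     (\<forall>t s. card {v. v < n_veh I \<and> act v t = Charging \<and> loc v t = s} \<le> st_chg I s)"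

definition rental_time :: "evsp_inst \<Rightarrow> nat set \<Rightarrow> nat" where
  "rental_time I S = (\<Sum>c\<in>S. \<Sum>e\<leftarrow>custs I ! c. d_arr e - d_dep e)"

definition evsp_opt :: "evsp_inst \<Rightarrow> nat" where
  "evsp_opt I = Max {rental_time I S | S. \<exists>asg act loc en. evsp_feasible I S asg act loc en}"

definition red_f :: "nat \<Rightarrow> (nat \<Rightarrow> real) \<Rightarrow> evsp_inst" where
  "red_f n l = \<lparr> n_st = 1, st_cap = (\<lambda>_. n), st_chg = (\<lambda>_. 0), batt = 1, c_rate = 1,
     n_veh = n, v_home = (\<lambda>_. 0), v_en0 = (\<lambda>_. 1),
     custs = map (\<lambda>i. [\<lparr>d_out = 0, d_dep = 2*i, d_in = 0, d_arr = 2*i+1, d_eps = l i\<rparr>]) [1..<n+1]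
             @ replicate n [\<lparr>d_out = 0, d_dep = 1, d_in = 0, d_arr = 2, d_eps = 1\<rparr>] \<rparr>"

end

theory Submission imports Defs begin

definition cd :: "nat \<Rightarrow> (nat \<Rightarrow> real) \<Rightarrow> nat \<Rightarrow> demand" where
  "cd n l c = (if c < n then \<lparr>d_out = 0, d_dep = 2*(c+1), d_in = 0, d_arr = 2*(c+1)+1, d_eps = l (c+1)\<rparr>
     else \<lparr>d_out = 0, d_dep = 1, d_in = 0, d_arr = 2, d_eps = 1\<rparr>)"

lemma len_red: "length (custs (red_f n l)) = 2*n"
  by (simp add: red_f_def)

lemma custs_red: "c < 2*n \<Longrightarrow> custs (red_f n l) ! c = [cd n l c]"
  apply (auto simp: red_f_def cd_def nth_append)
  apply (subgoal_tac "n = Suc c")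
   apply simp
  apply arith
  done

lemma valid_red: "valid_dem (red_f n l) d \<longleftrightarrow> fst d < 2*n \<and> snd d = 0"
  by (auto simp: valid_dem_def len_red custs_red)

lemma dem_red: "valid_dem (red_f n l) d \<Longrightarrow> dem (red_f n l) d = cd n l (fst d)"
  by (auto simp: valid_red dem_def custs_red)

lemma cd_arr: "d_arr (cd n l c) = Suc (d_dep (cd n l c))"
  by (simp add: cd_def)
lemma cd_simps[simp]: "d_out (cd n l c) = 0" "d_in (cd n l c) = 0" "d_dep (cd n l c) \<ge> 1"
  by (auto simp: cd_def)
lemma cd_arr_le: "c < 2*n \<Longrightarrow> d_arr (cd n l c) \<le> 2*n+1"
  by (auto simp: cd_def)

lemma rental_red: "S \<subseteq> {..<2*n} \<Longrightarrow> rental_time (red_f n l) S = card S"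
  unfolding rental_time_def
  by (rule trans[OF sum.cong[OF refl, where h="\<lambda>_. 1"]]) (auto simp: custs_red cd_def)

lemma bpp_from_labels:
  assumes "\<forall>j. (\<Sum>i\<in>{i\<in>{1..n}. h i = j}. l i) \<le> (1::real)"
  shows "bpp_feasible n l (card (h ` {1..n}))"
proof -
  let ?F = "\<lambda>j. {i\<in>{1..n}. h i = j}"
  let ?P = "?F ` (h ` {1..n})"
  have p1: "partition_on {1..n} ?P"
  proof (rule partition_onI)
    show "\<Union>?P = {1..n}" by auto
    show "disjnt p q" if pq: "p \<in> ?P" "q \<in> ?P" "p \<noteq> q" for p q
    proof -
      obtain a b where "p = ?F a" "q = ?F b" using pq(1,2) by blast
      thus ?thesis using pq(3) unfolding disjnt_def by auto
    qed
    show "{} \<notin> ?P" by auto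
  qed
  moreover have "inj_on ?F (h ` {1..n})"
  proof (rule inj_onI)
    fix x y assume xy: "x \<in> h ` {1..n}" "y \<in> h ` {1..n}" "?F x = ?F y"
    then obtain i where i: "i \<in> {1..n}" "x = h i" by blast
    hence "i \<in> ?F x" by simp
    hence "i \<in> ?F y" using xy(3) by (simp only:)
    thus "x = y" using i by (simp only: mem_Collect_eq)
  qed
  hence p2: "card ?P = card (h ` {1..n})" by (rule card_image)
  have p3: "\<forall>B\<in>?P. (\<Sum>i\<in>B. l i) \<le> 1" using assms by blast
  show ?thesis unfolding bpp_feasible_def
    by (rule exI[of _ ?P]) (intro conjI p1 p2 p3)
qed

lemma labels_from_bpp:
  assumes "bpp_feasible n l k"
  shows "\<exists>h. (\<forall>i\<in>{1..n}. h i < k) \<and> (\<forall>j. (\<Sum>i\<in>{i\<in>{1..n}. h i = j}. l i) \<le> (1::real))"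
proof -
  obtain P where P: "partition_on {1..n} P" "card P = k" "\<forall>B\<in>P. (\<Sum>i\<in>B. l i) \<le> 1"
    using assms unfolding bpp_feasible_def by blast
  have U: "\<Union>P = {1..n}" using partition_onD1[OF P(1)] by simp
  have fin: "finite P" using U
    by (metis finite_UnionD finite_atLeastAtMost)
  obtain e where e: "bij_betw e {0..<k} P" using ex_bij_betw_nat_finite[OF fin] P(2) by blast
  have eim: "e ` {0..<k} = P" using bij_betw_imp_surj_on[OF e] .
  have einj: "inj_on e {0..<k}" using bij_betw_imp_inj_on[OF e] .
  have eP: "e j \<in> P" if "j < k" for j using eim that by auto
  have ex: "\<exists>!j. j < k \<and> i \<in> e j" if "i \<in> {1..n}" for i
  proof -
    have "i \<in> \<Union>P" using U that by simp
    then obtain B where B: "B \<in> P" "i \<in> B" by (rule UnionE)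
    then obtain j where j: "j < k" "e j = B" using eim by (metis atLeastLessThan_iff imageE)
    show ?thesis
    proof (rule ex1I[of _ j])
      show "j < k \<and> i \<in> e j" using j B by simp
      fix j' assume j': "j' < k \<and> i \<in> e j'"
      have "e j' \<in> P" using eP j' by simp
      have "e j' = e j"
      proof (rule ccontr)
        assume "e j' \<noteq> e j"
        hence "e j' \<inter> e j = {}" using partition_onD2[OF P(1)] \<open>e j' \<in> P\<close> eP[OF j(1)]
          unfolding disjoint_def by blast
        thus False using j' j B by auto
      qed
      thus "j' = j" using inj_onD[OF einj] j j' by simp
    qed
  qed
  define h where "h i = (THE j. j < k \<and> i \<in> e j)" for i
  have h: "h i < k \<and> i \<in> e (h i)" if "i \<in> {1..n}" for i
    unfolding h_def using theI'[OF ex[OF that]] .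
  have hu: "h i = j" if "i \<in> {1..n}" "j < k" "i \<in> e j" for i j
    unfolding h_def using the1_equality[OF ex[OF that(1)]] that(2,3) by simp
  have "(\<Sum>i\<in>{i\<in>{1..n}. h i = j}. l i) \<le> 1" for j
  proof (cases "j < k")
    case True
    have "e j \<subseteq> {1..n}" using U eP[OF True] by blast
    hence "{i\<in>{1..n}. h i = j} = e j" using h hu True by auto
    thus ?thesis using P(3) eP[OF True] by simp
  next
    case False
    hence "{i\<in>{1..n}. h i = j} = {}" using h by auto
    show ?thesis unfolding \<open>{i\<in>{1..n}. h i = j} = {}\<close> by simp
  qed
  thus ?thesis using h by blast
qed

lemma bpp_opt_props:
  assumes "\<forall>i\<in>{1..n}. 0 < l i \<and> l i \<le> 1"
  shows "bpp_feasible n l (bpp_opt n l)" "bpp_opt n l \<le> n"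
    "bpp_feasible n l k \<Longrightarrow> bpp_opt n l \<le> k"
proof -
  have "bpp_feasible n l (card ((\<lambda>i. i) ` {1..n}))"
  proof (rule bpp_from_labels, rule allI)
    fix j
    have "{i\<in>{1..n}. i = j} = (if j \<in> {1..n} then {j} else {})" by auto
    thus "(\<Sum>i\<in>{i\<in>{1..n}. i = j}. l i) \<le> 1" using assms by auto
  qed
  hence f: "bpp_feasible n l n" by simp
  show "bpp_feasible n l (bpp_opt n l)" unfolding bpp_opt_def by (rule LeastI[where P="bpp_feasible n l", OF f])
  show "bpp_opt n l \<le> n" unfolding bpp_opt_def by (rule Least_le[where P="bpp_feasible n l", OF f])
  show "bpp_feasible n l k \<Longrightarrow> bpp_opt n l \<le> k" unfolding bpp_opt_def by (rule Least_le)
qed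

lemma red_fields[simp]: "n_veh (red_f n l) = n" "n_st (red_f n l) = 1" "st_cap (red_f n l) = (\<lambda>_. n)"
  "st_chg (red_f n l) = (\<lambda>_. 0)" "batt (red_f n l) = 1" "c_rate (red_f n l) = 1"
  "v_home (red_f n l) = (\<lambda>_. 0)" "v_en0 (red_f n l) = (\<lambda>_. 1)"
  by (simp_all add: red_f_def)

definition sched_en :: "nat \<Rightarrow> (nat \<Rightarrow> real) \<Rightarrow> nat set \<Rightarrow> (nat \<Rightarrow> nat) \<Rightarrow> nat \<Rightarrow> nat \<Rightarrow> real" where
  "sched_en n l S a v t = 1 - (\<Sum>c\<in>{c\<in>S. a c = v \<and> d_arr (cd n l c) \<le> t}. d_eps (cd n l c))"

definition sched_act :: "nat \<Rightarrow> (nat \<Rightarrow> real) \<Rightarrow> nat set \<Rightarrow> (nat \<Rightarrow> nat) \<Rightarrow> nat \<Rightarrow> nat \<Rightarrow> action" where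
  "sched_act n l S a v t = (if \<exists>c\<in>S. a c = v \<and> d_dep (cd n l c) = t
     then Riding (THE c. c\<in>S \<and> a c = v \<and> d_dep (cd n l c) = t, 0) else Idle)"

lemma sched_ok:
  assumes S: "S \<subseteq> {..<2*n}" and A: "\<forall>c\<in>S. a c < n"
    and U: "\<forall>c\<in>S. \<forall>c'\<in>S. a c = a c' \<and> d_dep (cd n l c) = d_dep (cd n l c') \<longrightarrow> c = c'"
    and E: "\<forall>v. (\<Sum>c\<in>{c\<in>S. a c = v}. d_eps (cd n l c)) \<le> 1"
    and P: "\<forall>c\<in>S. 0 \<le> d_eps (cd n l c)"
  shows "evsp_feasible (red_f n l) S (\<lambda>d. a (fst d)) (sched_act n l S a) (\<lambda>_ _. 0) (sched_en n l S a)"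
proof -
  let ?I = "red_f n l"
  let ?act = "sched_act n l S a"
  let ?en = "sched_en n l S a"
  let ?A = "\<lambda>v t. {c\<in>S. a c = v \<and> d_arr (cd n l c) \<le> t}"
  have finS: "finite S" using S finite_subset by blast
  have finA: "finite (?A v t)" for v t using finS by simp
  have uq: "c = c'" if "c \<in> S" "c' \<in> S" "a c = a c'" "d_dep (cd n l c) = d_dep (cd n l c')" for c c'
    using U that by blast
  have ex1: "\<exists>!c. c\<in>S \<and> a c = v \<and> d_dep (cd n l c) = t" if "c0 \<in> S" "a c0 = v" "d_dep (cd n l c0) = t" for c0 v t
  proof (rule ex1I[of _ c0])
    show "c0 \<in> S \<and> a c0 = v \<and> d_dep (cd n l c0) = t" using that by simp
    fix c assume "c \<in> S \<and> a c = v \<and> d_dep (cd n l c) = t"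
    thus "c = c0" using uq[of c c0] that by simp
  qed
  have k1: "\<exists>c. d = (c, 0) \<and> c \<in> S \<and> a c = v \<and> d_dep (cd n l c) = t" if "?act v t = Riding d" for v t d
  proof -
    have ex: "\<exists>c\<in>S. a c = v \<and> d_dep (cd n l c) = t"
    proof (rule ccontr)
      assume "\<not> (\<exists>c\<in>S. a c = v \<and> d_dep (cd n l c) = t)"
      hence "?act v t = Idle" unfolding sched_act_def by (simp only: if_False)
      thus False using that by simp
    qed
    then obtain c0 where c0: "c0 \<in> S" "a c0 = v" "d_dep (cd n l c0) = t" by blast
    have "?act v t = Riding (THE c. c\<in>S \<and> a c = v \<and> d_dep (cd n l c) = t, 0)"
      unfolding sched_act_def using ex by (simp only: if_True)
    hence "d = (THE c. c\<in>S \<and> a c = v \<and> d_dep (cd n l c) = t, 0)" using that by simp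
    thus ?thesis using theI'[OF ex1[OF c0]] by blast
  qed
  have k2: "?act v (d_dep (cd n l c)) = Riding (c, 0)" if "c \<in> S" "a c = v" for c v
  proof -
    have th: "(THE c'. c'\<in>S \<and> a c' = v \<and> d_dep (cd n l c') = d_dep (cd n l c)) = c"
      by (rule the1_equality[OF ex1[OF that refl]]) (use that in simp)
    have ex: "\<exists>c'\<in>S. a c' = v \<and> d_dep (cd n l c') = d_dep (cd n l c)" using that by blast
    have "?act v (d_dep (cd n l c)) = Riding (THE c'. c'\<in>S \<and> a c' = v \<and> d_dep (cd n l c') = d_dep (cd n l c), 0)"
      unfolding sched_act_def using ex by (simp only: if_True)
    thus ?thesis using th by simp
  qed
  have sumle: "(\<Sum>c\<in>B. d_eps (cd n l c)) \<le> 1" if "B \<subseteq> {c\<in>S. a c = v}" for B v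
  proof -
    have fin: "finite {c\<in>S. a c = v}" using finS by simp
    have "(\<Sum>c\<in>B. d_eps (cd n l c)) \<le> (\<Sum>c\<in>{c\<in>S. a c = v}. d_eps (cd n l c))"
    proof (rule sum_mono2[OF fin that])
      fix b assume "b \<in> {c\<in>S. a c = v} - B"
      hence "b \<in> S" by blast
      thus "0 \<le> d_eps (cd n l b)" using P by blast
    qed
    thus ?thesis using E[rule_format, of v] by linarith
  qed
  have sumge: "0 \<le> (\<Sum>c\<in>?A v t. d_eps (cd n l c))" for v t
  proof (rule sum_nonneg)
    fix x assume "x \<in> ?A v t"
    hence "x \<in> S" by blast
    thus "0 \<le> d_eps (cd n l x)" using P by blast
  qed
  have en01: "0 \<le> ?en v t \<and> ?en v t \<le> 1" for v t
  proof -
    have "?A v t \<subseteq> {c\<in>S. a c = v}" by blast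
    hence "(\<Sum>c\<in>?A v t. d_eps (cd n l c)) \<le> 1" by (rule sumle)
    thus ?thesis using sumge[of v t] unfolding sched_en_def by linarith
  qed
  have idle: "?A v (Suc t) = ?A v t" if "?act v t = Idle" for v t
  proof -
    have "c \<in> ?A v t" if "c \<in> ?A v (Suc t)" for c
    proof (rule ccontr)
      assume "c \<notin> ?A v t"
      hence "d_dep (cd n l c) = t" using that cd_arr[of n l c] by auto
      hence "?act v t = Riding (c,0)" using k2[of c v] that by auto
      thus False using \<open>?act v t = Idle\<close> by simp
    qed
    thus ?thesis by auto
  qed
  have ride: "?A v (d_arr (cd n l c)) = insert c (?A v (d_dep (cd n l c))) \<and> c \<notin> ?A v (d_dep (cd n l c))"
    if "c \<in> S" "a c = v" for c v
  proof -
    have "c' = c" if "c' \<in> ?A v (d_arr (cd n l c))" "c' \<notin> ?A v (d_dep (cd n l c))" for c'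
    proof -
      have "d_arr (cd n l c') \<le> d_arr (cd n l c)" "\<not> d_arr (cd n l c') \<le> d_dep (cd n l c)" "c' \<in> S" "a c' = v"
        using that by auto
      hence "d_dep (cd n l c') = d_dep (cd n l c)" using cd_arr[of n l c] cd_arr[of n l c'] by simp
      thus ?thesis using uq[of c' c] \<open>c' \<in> S\<close> \<open>a c' = v\<close> \<open>c \<in> S\<close> \<open>a c = v\<close> by simp
    qed
    moreover have "?A v (d_dep (cd n l c)) \<subseteq> ?A v (d_arr (cd n l c))" using cd_arr[of n l c] by auto
    moreover have "c \<in> ?A v (d_arr (cd n l c))" "c \<notin> ?A v (d_dep (cd n l c))"
      using that cd_arr[of n l c] by auto
    ultimately show ?thesis by (intro conjI equalityI subsetI) auto
  qed
  have c1: "S \<subseteq> {..<length (custs ?I)}" using S by (simp add: len_red)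
  have c2: "\<forall>v<n. (0::nat) = 0 \<and> ?en v 0 = 1"
  proof (intro allI impI conjI)
    fix v show "?en v 0 = 1"
    proof -
      have "?A v 0 = {}" using cd_arr[of n l] by (auto simp del: cd_simps)
      show ?thesis unfolding sched_en_def \<open>?A v 0 = {}\<close> by simp
    qed
  qed simp
  have c3: "\<forall>v<n. \<forall>t. 0 \<le> ?en v t \<and> ?en v t \<le> 1" using en01 by blast
  have c4: "\<forall>v<n. \<forall>t. parked ?I ?act v t \<longrightarrow> (0::nat) < 1" by simp
  have notC: "?act v t \<noteq> Charging" for v t unfolding sched_act_def by simp
  have c5: "\<forall>v<n. \<forall>t. (?act v t = Idle \<longrightarrow> (0::nat) = 0 \<and> ?en v (Suc t) = ?en v t)
     \<and> (?act v t = Charging \<longrightarrow> (0::nat) = 0 \<and> ?en v t \<le> ?en v (Suc t)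
           \<and> ?en v (Suc t) \<le> min 1 (?en v t + 1))"
  proof (intro allI impI conjI)
    fix v t assume "?act v t = Idle"
    show "?en v (Suc t) = ?en v t" unfolding sched_en_def idle[OF \<open>?act v t = Idle\<close>] ..
  qed (simp_all add: notC)
  have c6: "\<forall>v<n. \<forall>t d. ?act v t = Riding d \<longrightarrow>
        valid_dem ?I d \<and> fst d \<in> S \<and> a (fst d) = v \<and> d_dep (dem ?I d) \<le> t \<and> t < d_arr (dem ?I d)"
  proof (intro allI impI)
    fix v t d assume "?act v t = Riding d"
    then obtain c where c: "d = (c, 0)" "c \<in> S" "a c = v" "d_dep (cd n l c) = t" using k1 by blast
    have v: "valid_dem ?I d" using c S by (auto simp: valid_red)
    have "dem ?I d = cd n l c" using dem_red[OF v] c by simp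
    thus "valid_dem ?I d \<and> fst d \<in> S \<and> a (fst d) = v \<and> d_dep (dem ?I d) \<le> t \<and> t < d_arr (dem ?I d)"
      using v c cd_arr[of n l c] by simp
  qed
  have c7: "\<forall>d. valid_dem ?I d \<and> fst d \<in> S \<longrightarrow> a (fst d) < n \<and>
          (\<forall>t. d_dep (dem ?I d) \<le> t \<and> t < d_arr (dem ?I d) \<longrightarrow> ?act (a (fst d)) t = Riding d) \<and>
          (0::nat) = d_out (dem ?I d) \<and> d_eps (dem ?I d) \<le> ?en (a (fst d)) (d_dep (dem ?I d)) \<and>
          (0::nat) = d_in (dem ?I d) \<and> ?en (a (fst d)) (d_arr (dem ?I d)) = ?en (a (fst d)) (d_dep (dem ?I d)) - d_eps (dem ?I d)"
  proof (intro allI impI)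
    fix d assume vd: "valid_dem ?I d \<and> fst d \<in> S"
    obtain c where dc: "d = (c, 0)" using vd by (cases d) (auto simp: valid_red)
    have cS: "c \<in> S" using vd dc by simp
    have de: "dem ?I d = cd n l c" using dem_red vd dc by simp
    define v where "v = a c"
    have r: "?A v (d_arr (cd n l c)) = insert c (?A v (d_dep (cd n l c)))" "c \<notin> ?A v (d_dep (cd n l c))"
      using ride[OF cS v_def[symmetric]] by auto
    have sI: "(\<Sum>c\<in>?A v (d_arr (cd n l c)). d_eps (cd n l c)) = d_eps (cd n l c) + (\<Sum>c\<in>?A v (d_dep (cd n l c)). d_eps (cd n l c))"
      unfolding r(1) using r(2) finA by (simp add: sum.insert)
    have le1: "(\<Sum>c\<in>?A v (d_arr (cd n l c)). d_eps (cd n l c)) \<le> 1" by (rule sumle[of _ v]) blast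
    have tt: "?act v t = Riding (c, 0)" if "d_dep (cd n l c) \<le> t \<and> t < d_arr (cd n l c)" for t
    proof -
      have "t = d_dep (cd n l c)" using that cd_arr[of n l c] by simp
      thus ?thesis using k2[OF cS v_def[symmetric]] by simp
    qed
    have de': "dem ?I (c, 0) = cd n l c" using de dc by simp
    have g1: "v < n" using A cS v_def by simp
    have g3: "d_eps (cd n l c) \<le> ?en v (d_dep (cd n l c))" unfolding sched_en_def using sI le1 by linarith
    have g4: "?en v (d_arr (cd n l c)) = ?en v (d_dep (cd n l c)) - d_eps (cd n l c)"
      unfolding sched_en_def using sI by linarith
    show "a (fst d) < n \<and>
          (\<forall>t. d_dep (dem ?I d) \<le> t \<and> t < d_arr (dem ?I d) \<longrightarrow> ?act (a (fst d)) t = Riding d) \<and>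
          (0::nat) = d_out (dem ?I d) \<and> d_eps (dem ?I d) \<le> ?en (a (fst d)) (d_dep (dem ?I d)) \<and>
          (0::nat) = d_in (dem ?I d) \<and> ?en (a (fst d)) (d_arr (dem ?I d)) = ?en (a (fst d)) (d_dep (dem ?I d)) - d_eps (dem ?I d)"
      unfolding dc fst_conv de' v_def[symmetric]
      by (intro conjI allI impI g1 g3 g4 tt) simp_all
  qed
  have c8: "\<forall>t s. s < 1 \<longrightarrow> card {v. v < n \<and> parked ?I ?act v t \<and> (0::nat) = s} \<le> n"
  proof (intro allI impI)
    fix t s
    have "card {v. v < n \<and> parked ?I ?act v t \<and> (0::nat) = s} \<le> card {..<n}"
      by (rule card_mono) auto
    thus "card {v. v < n \<and> parked ?I ?act v t \<and> (0::nat) = s} \<le> n" by simp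
  qed
  have c9: "\<forall>t s. card {v. v < n \<and> ?act v t = Charging \<and> (0::nat) = s} \<le> 0"
    using notC by simp
  show ?thesis unfolding evsp_feasible_def Let_def red_fields
    by (intro conjI c1 c2 c3 c4 c5 c6 c7 c8 c9)
qed


lemma eps_pos: "\<forall>i\<in>{1..n}. 0 < l i \<and> l i \<le> 1 \<Longrightarrow> c < 2*n \<Longrightarrow> 0 < d_eps (cd n l c)"
  by (auto simp: cd_def)

lemma lower:
  assumes L: "\<forall>i\<in>{1..n}. 0 < l i \<and> l i \<le> 1"
  shows "\<exists>asg act loc en. evsp_feasible (red_f n l) {..<2*n - bpp_opt n l} asg act loc en"
proof -
  define k where "k = bpp_opt n l"
  have kn: "k \<le> n" using bpp_opt_props(2)[OF L] k_def by simp
  obtain h where h: "\<forall>i\<in>{1..n}. h i < k" "\<forall>j. (\<Sum>i\<in>{i\<in>{1..n}. h i = j}. l i) \<le> (1::real)"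
    using labels_from_bpp[OF bpp_opt_props(1)[OF L]] k_def by blast
  define a where "a c = (if c < n then h (c+1) else k + (c - n))" for c
  define S where "S = {..<2*n - k}"
  have S: "S \<subseteq> {..<2*n}" unfolding S_def by auto
  have A: "\<forall>c\<in>S. a c < n"
  proof
    fix c assume "c \<in> S"
    show "a c < n"
    proof (cases "c < n")
      case True
      hence "h (c+1) < k" using h(1) by simp
      thus ?thesis using True kn unfolding a_def by simp
    next
      case False
      thus ?thesis using \<open>c \<in> S\<close> kn unfolding a_def S_def by simp
    qed
  qed
  have U: "\<forall>c\<in>S. \<forall>c'\<in>S. a c = a c' \<and> d_dep (cd n l c) = d_dep (cd n l c') \<longrightarrow> c = c'"
  proof (intro ballI impI)
    fix c c' assume cc: "c \<in> S" "c' \<in> S" "a c = a c' \<and> d_dep (cd n l c) = d_dep (cd n l c')"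
    show "c = c'"
    proof (cases "c < n"; cases "c' < n")
      assume "c < n" "c' < n" thus ?thesis using cc unfolding cd_def by simp
    next
      assume "c < n" "\<not> c' < n" thus ?thesis using cc unfolding cd_def by simp
    next
      assume "\<not> c < n" "c' < n" thus ?thesis using cc unfolding cd_def by simp
    next
      assume nn: "\<not> c < n" "\<not> c' < n"
      hence "k + c - n = k + c' - n" using cc unfolding a_def by simp
      moreover have "k + c - n = k + (c - n)" "k + c' - n = k + (c' - n)" using nn by simp_all
      ultimately have "c - n = c' - n" by simp
      thus ?thesis using nn eq_diff_iff[of n c c'] by simp
    qed
  qed
  have E: "\<forall>v. (\<Sum>c\<in>{c\<in>S. a c = v}. d_eps (cd n l c)) \<le> 1"
  proof
    fix v
    show "(\<Sum>c\<in>{c\<in>S. a c = v}. d_eps (cd n l c)) \<le> 1"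
    proof (cases "v < k")
      case True
      have eq: "{c\<in>S. a c = v} = {c. c < n \<and> h (Suc c) = v}"
      proof (intro equalityI subsetI)
        fix c assume "c \<in> {c\<in>S. a c = v}"
        thus "c \<in> {c. c < n \<and> h (Suc c) = v}" using True unfolding a_def by (auto split: if_splits)
      next
        fix c assume "c \<in> {c. c < n \<and> h (Suc c) = v}"
        thus "c \<in> {c\<in>S. a c = v}" using kn unfolding a_def S_def by auto
      qed
      have im: "Suc ` {c. c < n \<and> h (Suc c) = v} = {i\<in>{1..n}. h i = v}"
      proof (intro equalityI subsetI)
        fix i assume "i \<in> Suc ` {c. c < n \<and> h (Suc c) = v}"
        thus "i \<in> {i\<in>{1..n}. h i = v}" by auto
      next
        fix i assume i: "i \<in> {i\<in>{1..n}. h i = v}"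
        hence "i = Suc (i - 1)" "i - 1 < n" "h (Suc (i - 1)) = v" by auto
        thus "i \<in> Suc ` {c. c < n \<and> h (Suc c) = v}" by blast
      qed
      have "(\<Sum>c\<in>{c\<in>S. a c = v}. d_eps (cd n l c)) = (\<Sum>c\<in>{c. c < n \<and> h (Suc c) = v}. l (Suc c))"
        unfolding eq by (rule sum.cong) (auto simp: cd_def)
      also have "\<dots> = (\<Sum>i\<in>Suc ` {c. c < n \<and> h (Suc c) = v}. l i)"
        by (rule sum.reindex[symmetric, unfolded comp_def]) simp
      also have "\<dots> \<le> 1" unfolding im using h(2) by blast
      finally show ?thesis .
    next
      case False
      have sub: "{c\<in>S. a c = v} \<subseteq> {n + v - k}"
      proof
        fix c assume c: "c \<in> {c\<in>S. a c = v}"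
        have "\<not> c < n"
        proof
          assume "c < n"
          hence "h (c+1) < k" using h(1) by simp
          moreover have "a c = h (c+1)" using \<open>c < n\<close> unfolding a_def by simp
          ultimately show False using c False by simp
        qed
        hence "a c = k + (c - n)" unfolding a_def by simp
        hence "k + (c - n) = v" using c by simp
        hence "c - n = v - k" by simp
        hence "c = n + (v - k)" using \<open>\<not> c < n\<close> by simp
        hence "c = n + v - k" using False by simp
        thus "c \<in> {n + v - k}" by simp
      qed
      have "n + v - k = n + (v - k)" using False by simp
      hence nl: "\<not> n + v - k < n" by simp
      have e1: "d_eps (cd n l (n + v - k)) = 1" unfolding cd_def using nl by (simp only: if_False demand.select_convs)
      have "{c\<in>S. a c = v} = {} \<or> {c\<in>S. a c = v} = {n + v - k}" using subset_singletonD[OF sub] .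
      thus ?thesis
      proof
        assume "{c\<in>S. a c = v} = {}"
        thus ?thesis by (simp only: sum.empty zero_le_one)
      next
        assume sg: "{c\<in>S. a c = v} = {n + v - k}"
        show ?thesis unfolding sg using e1 by simp
      qed
    qed
  qed
  have P: "\<forall>c\<in>S. 0 \<le> d_eps (cd n l c)"
  proof
    fix c assume "c \<in> S"
    hence "c < 2*n" using S by auto
    thus "0 \<le> d_eps (cd n l c)" using eps_pos[OF L] by (simp add: less_imp_le)
  qed
  have "evsp_feasible (red_f n l) S (\<lambda>d. a (fst d)) (sched_act n l S a) (\<lambda>_ _. 0) (sched_en n l S a)"
    by (rule sched_ok[OF S A U E P])
  thus ?thesis unfolding S_def k_def by (intro exI)
qed


lemma upper_fib:
  assumes L: "\<forall>i\<in>{1..n}. 0 < l i \<and> l i \<le> 1"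
    and F: "evsp_feasible (red_f n l) S asg act loc en"
  shows "S \<subseteq> {..<2*n}" "\<forall>c\<in>S. asg (c, 0) < n"
    "\<forall>v<n. (\<Sum>c\<in>{c\<in>S. asg (c, 0) = v}. d_eps (cd n l c)) \<le> 1"
proof -
  let ?I = "red_f n l"
  note F' = F[unfolded evsp_feasible_def Let_def red_fields]
  have fS: "S \<subseteq> {..<2*n}" using F'[THEN conjunct1] by (simp add: len_red)
  have f0: "\<forall>v<n. loc v 0 = 0 \<and> en v 0 = 1" using F'[THEN conjunct2, THEN conjunct1] .
  have fE: "\<forall>v<n. \<forall>t. 0 \<le> en v t \<and> en v t \<le> 1"
    using F'[THEN conjunct2, THEN conjunct2, THEN conjunct1] .
  have fI: "\<forall>v<n. \<forall>t. (act v t = Idle \<longrightarrow> loc v (Suc t) = loc v t \<and> en v (Suc t) = en v t)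
        \<and> (act v t = Charging \<longrightarrow> loc v (Suc t) = loc v t \<and> en v t \<le> en v (Suc t)
              \<and> en v (Suc t) \<le> min 1 (en v t + 1))"
    using F'[THEN conjunct2, THEN conjunct2, THEN conjunct2, THEN conjunct2, THEN conjunct1] .
  have fR: "\<forall>v<n. \<forall>t d. act v t = Riding d \<longrightarrow>
        valid_dem ?I d \<and> fst d \<in> S \<and> asg d = v \<and> d_dep (dem ?I d) \<le> t \<and> t < d_arr (dem ?I d)"
    using F'[THEN conjunct2, THEN conjunct2, THEN conjunct2, THEN conjunct2, THEN conjunct2, THEN conjunct1] .
  have fD: "\<forall>d. valid_dem ?I d \<and> fst d \<in> S \<longrightarrow>
          asg d < n \<and>
          (\<forall>t. d_dep (dem ?I d) \<le> t \<and> t < d_arr (dem ?I d) \<longrightarrow> act (asg d) t = Riding d) \<and>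
          loc (asg d) (d_dep (dem ?I d)) = d_out (dem ?I d) \<and> d_eps (dem ?I d) \<le> en (asg d) (d_dep (dem ?I d)) \<and>
          loc (asg d) (d_arr (dem ?I d)) = d_in (dem ?I d) \<and> en (asg d) (d_arr (dem ?I d)) = en (asg d) (d_dep (dem ?I d)) - d_eps (dem ?I d)"
    using F'[THEN conjunct2, THEN conjunct2, THEN conjunct2, THEN conjunct2, THEN conjunct2, THEN conjunct2, THEN conjunct1] .
  have fC: "\<forall>t s. card {v. v < n \<and> act v t = Charging \<and> loc v t = s} \<le> 0"
    using F'[THEN conjunct2, THEN conjunct2, THEN conjunct2, THEN conjunct2, THEN conjunct2, THEN conjunct2, THEN conjunct2, THEN conjunct2] .
  show "S \<subseteq> {..<2*n}" by (rule fS)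
  have finS: "finite S" using fS finite_subset by blast
  have vd: "valid_dem ?I (c, 0)" if "c \<in> S" for c using that fS by (auto simp: valid_red)
  have dm: "dem ?I (c, 0) = cd n l c" if "c \<in> S" for c using dem_red[OF vd[OF that]] by simp
  have D: "asg (c, 0) < n \<and>
          (\<forall>t. d_dep (cd n l c) \<le> t \<and> t < d_arr (cd n l c) \<longrightarrow> act (asg (c, 0)) t = Riding (c, 0)) \<and>
          d_eps (cd n l c) \<le> en (asg (c, 0)) (d_dep (cd n l c)) \<and>
          en (asg (c, 0)) (d_arr (cd n l c)) = en (asg (c, 0)) (d_dep (cd n l c)) - d_eps (cd n l c)"
    if "c \<in> S" for c
    using fD[rule_format, of "(c, 0)"] vd[OF that] that dm[OF that] by simp
  show "\<forall>c\<in>S. asg (c, 0) < n" using D by blast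
  have noC: "act v t \<noteq> Charging" if "v < n" for v t
  proof
    assume ch: "act v t = Charging"
    let ?X = "{w. w < n \<and> act w t = Charging \<and> loc w t = loc v t}"
    have "finite ?X" by (rule finite_subset[of _ "{..<n}"]) auto
    moreover have "card ?X = 0" using fC by (meson le_zero_eq)
    ultimately have "?X = {}" by simp
    moreover have "v \<in> ?X" using that ch by simp
    ultimately show False by blast
  qed
  have ride1: "act v t = Riding (c, 0)" if "c \<in> S" "asg (c, 0) = v" "d_dep (cd n l c) = t" for c v t
    using D[OF that(1)] that cd_arr[of n l c] by auto
  let ?A = "\<lambda>v t. {c\<in>S. asg (c, 0) = v \<and> d_arr (cd n l c) \<le> t}"
  have finA: "finite (?A v t)" for v t using finS by simp
  have inv: "(\<Sum>c\<in>?A v t. d_eps (cd n l c)) \<le> 1 - en v t" if "v < n" for v t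
  proof (induction t)
    case 0
    have "?A v 0 = {}" using cd_arr[of n l] by (auto simp del: cd_simps)
    show ?case unfolding \<open>?A v 0 = {}\<close> using f0 that by simp
  next
    case (Suc t)
    show ?case
    proof (cases "act v t")
      case Idle
      have e: "en v (Suc t) = en v t" using fI that Idle by simp
      have "?A v (Suc t) = ?A v t"
      proof (intro equalityI subsetI)
        fix c assume c: "c \<in> ?A v (Suc t)"
        show "c \<in> ?A v t"
        proof (rule ccontr)
          assume "c \<notin> ?A v t"
          hence "d_dep (cd n l c) = t" using c cd_arr[of n l c] by auto
          hence "act v t = Riding (c, 0)" using ride1 c by auto
          thus False using Idle by simp
        qed
      next
        fix c assume "c \<in> ?A v t" thus "c \<in> ?A v (Suc t)" by auto
      qed
      thus ?thesis using Suc.IH e by simp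
    next
      case Charging
      thus ?thesis using noC[OF that] by simp
    next
      case (Riding d)
      have r: "valid_dem ?I d \<and> fst d \<in> S \<and> asg d = v \<and> d_dep (dem ?I d) \<le> t \<and> t < d_arr (dem ?I d)"
        using fR that Riding by blast
      obtain c0 where d: "d = (c0, 0)" using r by (cases d) (auto simp: valid_red)
      have c0: "c0 \<in> S" "asg (c0, 0) = v" using r d by auto
      have t0: "d_dep (cd n l c0) = t" using r d dm[OF c0(1)] cd_arr[of n l c0] by simp
      have e: "en v (Suc t) = en v t - d_eps (cd n l c0)"
        using D[OF c0(1)] c0(2) t0 cd_arr[of n l c0] by simp
      have ins: "?A v (Suc t) = insert c0 (?A v t)"
      proof (intro equalityI subsetI)
        fix c assume c: "c \<in> ?A v (Suc t)"
        show "c \<in> insert c0 (?A v t)"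
        proof (cases "c \<in> ?A v t")
          case False
          hence "d_dep (cd n l c) = t" using c cd_arr[of n l c] by auto
          hence "act v t = Riding (c, 0)" using ride1 c by auto
          hence "c = c0" using Riding d by simp
          thus ?thesis by simp
        qed simp
      next
        fix c assume "c \<in> insert c0 (?A v t)"
        thus "c \<in> ?A v (Suc t)" using c0 t0 cd_arr[of n l c0] by auto
      qed
      have nin: "c0 \<notin> ?A v t" using t0 cd_arr[of n l c0] by auto
      have "(\<Sum>c\<in>?A v (Suc t). d_eps (cd n l c)) = d_eps (cd n l c0) + (\<Sum>c\<in>?A v t. d_eps (cd n l c))"
        unfolding ins using nin finA by (simp add: sum.insert)
      thus ?thesis using Suc.IH e by simp
    qed
  qed
  show "\<forall>v<n. (\<Sum>c\<in>{c\<in>S. asg (c, 0) = v}. d_eps (cd n l c)) \<le> 1"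
  proof (intro allI impI)
    fix v assume v: "v < n"
    have "?A v (2*n+1) = {c\<in>S. asg (c, 0) = v}" using fS cd_arr_le[of _ n l] by auto
    moreover have "0 \<le> en v (2*n+1)" using fE v by simp
    ultimately show "(\<Sum>c\<in>{c\<in>S. asg (c, 0) = v}. d_eps (cd n l c)) \<le> 1"
      using inv[OF v, of "2*n+1"] by simp
  qed
qed


lemma upper:
  assumes L: "\<forall>i\<in>{1..n}. 0 < l i \<and> l i \<le> 1"
    and F: "evsp_feasible (red_f n l) S asg act loc en"
  shows "card S + bpp_opt n l \<le> 2*n"
proof -
  have fS: "S \<subseteq> {..<2*n}" and fA: "\<forall>c\<in>S. asg (c, 0) < n"
    and fib: "\<forall>v<n. (\<Sum>c\<in>{c\<in>S. asg (c, 0) = v}. d_eps (cd n l c)) \<le> 1"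
    using upper_fib[OF L F] by auto
  define g where "g c = asg (c, 0)" for c
  have finS: "finite S" using fS finite_subset by blast
  have sub_le: "(\<Sum>c\<in>B. d_eps (cd n l c)) \<le> 1" if "v < n" "B \<subseteq> {c\<in>S. g c = v}" for v B
  proof -
    have fin: "finite {c\<in>S. g c = v}" using finS by simp
    have "(\<Sum>c\<in>B. d_eps (cd n l c)) \<le> (\<Sum>c\<in>{c\<in>S. g c = v}. d_eps (cd n l c))"
    proof (rule sum_mono2[OF fin that(2)])
      fix b assume "b \<in> {c\<in>S. g c = v} - B"
      hence "b < 2*n" using fS by auto
      thus "0 \<le> d_eps (cd n l b)" using eps_pos[OF L] less_imp_le by blast
    qed
    thus ?thesis using fib that(1) unfolding g_def by fastforce
  qed
  define T where "T = {c\<in>S. c < n}"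
  define D where "D = {c\<in>S. \<not> c < n}"
  have finT: "finite T" "finite D" unfolding T_def D_def using finS by simp_all
  have pair: "False" if "c \<in> S" "c' \<in> S" "c \<noteq> c'" "g c = g c'" "\<not> c < n" for c c'
  proof -
    have v: "g c < n" using fA that(1) unfolding g_def by blast
    have "{c, c'} \<subseteq> {x\<in>S. g x = g c}" using that by auto
    hence le: "(\<Sum>x\<in>{c, c'}. d_eps (cd n l x)) \<le> 1" by (rule sub_le[OF v])
    have "(\<Sum>x\<in>{c, c'}. d_eps (cd n l x)) = d_eps (cd n l c) + d_eps (cd n l c')"
      using that(3) by simp
    moreover have "d_eps (cd n l c) = 1" using that(5) unfolding cd_def by simp
    moreover have "0 < d_eps (cd n l c')" using eps_pos[OF L] that(2) fS by auto
    ultimately show False using le by linarith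
  qed
  have injD: "inj_on g D"
  proof (rule inj_onI)
    fix c c' assume "c \<in> D" "c' \<in> D" "g c = g c'"
    thus "c = c'" using pair[of c c'] unfolding D_def by blast
  qed
  have disj: "g ` D \<inter> g ` T = {}"
  proof (rule ccontr)
    assume "g ` D \<inter> g ` T \<noteq> {}"
    then obtain c c' where "c \<in> D" "c' \<in> T" "g c = g c'" by blast
    moreover hence "c \<noteq> c'" unfolding D_def T_def by auto
    ultimately show False using pair[of c c'] unfolding D_def T_def by blast
  qed
  have "g ` D \<union> g ` T \<subseteq> {..<n}" using fA unfolding g_def D_def T_def by auto
  hence "card (g ` D \<union> g ` T) \<le> n" using card_mono[of "{..<n}"] by fastforce
  hence cardU: "card (g ` D) + card (g ` T) \<le> n" using card_Un_disjoint[OF _ _ disj] finT by simp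
  have "S = T \<union> D" "T \<inter> D = {}" unfolding T_def D_def by auto
  hence cardS: "card S = card T + card D" using card_Un_disjoint finT by simp
  have cardD: "card D = card (g ` D)" using card_image[OF injD] by simp
  have cardT: "card T \<le> n"
  proof -
    have "T \<subseteq> {..<n}" unfolding T_def by auto
    thus ?thesis using card_mono[of "{..<n}" T] by simp
  qed
  define h where "h i = (if i - 1 \<in> T then g (i - 1) else n + i)" for i
  have gT: "g c < n" if "c \<in> T" for c using fA that unfolding g_def T_def by blast
  have Fib: "\<forall>j. (\<Sum>i\<in>{i\<in>{1..n}. h i = j}. l i) \<le> (1::real)"
  proof
    fix j
    show "(\<Sum>i\<in>{i\<in>{1..n}. h i = j}. l i) \<le> (1::real)"
    proof (cases "j < n")
      case True
      have im: "{i\<in>{1..n}. h i = j} = Suc ` {c\<in>T. g c = j}"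
      proof (intro equalityI subsetI)
        fix i assume i: "i \<in> {i\<in>{1..n}. h i = j}"
        have "i - 1 \<in> T"
        proof (rule ccontr)
          assume "i - 1 \<notin> T"
          hence "h i = n + i" unfolding h_def by simp
          thus False using i True by simp
        qed
        moreover hence "g (i - 1) = j" using i unfolding h_def by simp
        moreover have "i = Suc (i - 1)" using i by auto
        ultimately show "i \<in> Suc ` {c\<in>T. g c = j}" by blast
      next
        fix i assume "i \<in> Suc ` {c\<in>T. g c = j}"
        then obtain c where c: "i = Suc c" "c \<in> T" "g c = j" by blast
        have "c < n" using c(2) unfolding T_def by simp
        thus "i \<in> {i\<in>{1..n}. h i = j}" using c unfolding h_def by simp
      qed
      have "(\<Sum>i\<in>{i\<in>{1..n}. h i = j}. l i) = (\<Sum>c\<in>{c\<in>T. g c = j}. l (Suc c))"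
        unfolding im by (rule sum.reindex[unfolded comp_def]) simp
      also have "\<dots> = (\<Sum>c\<in>{c\<in>T. g c = j}. d_eps (cd n l c))"
        by (rule sum.cong) (auto simp: T_def cd_def)
      also have "\<dots> \<le> 1" by (rule sub_le[OF True]) (auto simp: T_def)
      finally show ?thesis .
    next
      case False
      have sub: "{i\<in>{1..n}. h i = j} \<subseteq> {j - n}"
      proof
        fix i assume i: "i \<in> {i\<in>{1..n}. h i = j}"
        have "i - 1 \<notin> T"
        proof
          assume "i - 1 \<in> T"
          hence "h i < n" unfolding h_def using gT by simp
          thus False using i False by simp
        qed
        hence "n + i = j" using i unfolding h_def by simp
        thus "i \<in> {j - n}" by simp
      qed
      have "{i\<in>{1..n}. h i = j} = {} \<or> {i\<in>{1..n}. h i = j} = {j - n}" using subset_singletonD[OF sub] .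
      thus ?thesis
      proof
        assume "{i\<in>{1..n}. h i = j} = {}"
        thus ?thesis by (simp only: sum.empty zero_le_one)
      next
        assume sg: "{i\<in>{1..n}. h i = j} = {j - n}"
        hence "j - n \<in> {1..n}" by blast
        thus ?thesis unfolding sg using L by simp
      qed
    qed
  qed
  have opt: "bpp_opt n l \<le> card (h ` {1..n})" by (rule bpp_opt_props(3)[OF L bpp_from_labels[OF Fib]])
  define R where "R = {1..n} - Suc ` T"
  have hsub: "h ` {1..n} \<subseteq> g ` T \<union> (\<lambda>i. n + i) ` R"
  proof
    fix x assume "x \<in> h ` {1..n}"
    then obtain i where i: "i \<in> {1..n}" "x = h i" by blast
    show "x \<in> g ` T \<union> (\<lambda>i. n + i) ` R"
    proof (cases "i - 1 \<in> T")
      case True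
      thus ?thesis using i unfolding h_def by simp
    next
      case False
      have "i \<notin> Suc ` T"
      proof
        assume "i \<in> Suc ` T"
        then obtain c where "i = Suc c" "c \<in> T" by blast
        thus False using False by simp
      qed
      hence "i \<in> R" using i unfolding R_def by blast
      thus ?thesis using i False unfolding h_def by simp
    qed
  qed
  have finR: "finite R" unfolding R_def by simp
  have "card (h ` {1..n}) \<le> card (g ` T \<union> (\<lambda>i. n + i) ` R)"
    by (rule card_mono[OF _ hsub]) (use finT finR in simp)
  also have "\<dots> \<le> card (g ` T) + card ((\<lambda>i. n + i) ` R)" by (rule card_Un_le)
  also have "\<dots> \<le> card (g ` T) + card R" using card_image_le[OF finR, of "\<lambda>i. n + i"] by simp
  also have "card R = n - card T"
  proof -
    have "Suc ` T \<subseteq> {1..n}" unfolding T_def by auto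
    hence "card R = card {1..n} - card (Suc ` T)" unfolding R_def by (simp add: card_Diff_subset finT)
    moreover have "card (Suc ` T) = card T" by (simp add: card_image)
    ultimately show ?thesis by simp
  qed
  finally have hc: "card (h ` {1..n}) \<le> card (g ` T) + (n - card T)" .
  have "n - card T + card T = n" using cardT by simp
  thus ?thesis using opt hc cardS cardD cardU by linarith
qed


theorem proposition6:
  fixes n :: nat and l :: "nat \<Rightarrow> real"
  assumes "\<forall>i\<in>{1..n}. 0 < l i \<and> l i \<le> 1"
  shows "int (evsp_opt (red_f n l)) = 2 * int n - int (bpp_opt n l)"
proof -
  note L = assms
  define k where "k = bpp_opt n l"
  have kn: "k \<le> n" using bpp_opt_props(2)[OF L] k_def by simp
  define V where "V = {rental_time (red_f n l) S | S. \<exists>asg act loc en. evsp_feasible (red_f n l) S asg act loc en}"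
  have mem: "2*n - k \<in> V"
  proof -
    have "\<exists>asg act loc en. evsp_feasible (red_f n l) {..<2*n - k} asg act loc en"
      using lower[OF L] k_def by simp
    moreover have "rental_time (red_f n l) {..<2*n - k} = 2*n - k"
      by (subst rental_red) auto
    ultimately show ?thesis unfolding V_def by force
  qed
  have bnd: "x \<le> 2*n - k" if xV: "x \<in> V" for x
  proof -
    obtain S asg act loc en where S: "x = rental_time (red_f n l) S" "evsp_feasible (red_f n l) S asg act loc en"
      using xV unfolding V_def by blast
    have "S \<subseteq> {..<2*n}" using upper_fib(1)[OF L S(2)] .
    hence "x = card S" using S(1) rental_red by simp
    thus ?thesis using upper[OF L S(2)] k_def by simp
  qed
  have fin: "finite V" by (rule finite_subset[of _ "{..2*n - k}"]) (use bnd in auto)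
  have "Max V = 2*n - k" by (rule Max_eqI[OF fin bnd mem])
  hence "evsp_opt (red_f n l) = 2*n - k" unfolding evsp_opt_def V_def by simp
  thus ?thesis using kn k_def by simp
qed

end
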